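(* There is an absolute constant $C>0$ and an algorithm with the following property. Let $S$ be a set of arms with reward distributions supported on $[0,1]$ and means $\theta_1\ge\dots\ge\theta_{|S|}$ (indexing unknown to the algorithm), where $|S|/10$ and $K/2$ are integers, $\frac{|S|}{3}\le K\le|S|-1$, and let $\gamma,\delta\in(0,1/2]$, $\phi\in(0,1]$. If $\theta_{K/2}-\theta_K\ge\phi$, then the algorithm makes at most $C\frac{|S|}{\phi^2}(\log\frac1\gamma+\log\frac1\delta)$ pulls and with probability at least $1-\delta$ outputs a set $T\subseteq S$ with $|T|=|S|/10$ such that at most $\gamma K$ arms of $T$ belong to $\{K+1,\dots,|S|\}$ (the bottom $|S|-K$ arms of $S$).
   Context: Stochastic bandit model: each pull yields an independent sample from the pulled arm's unknown distribution. *)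

theory Defs
  imports "HOL-Probability.Probability"
begin

text \<open>An algorithm, after seeing the history (list of (pulled arm, observed reward)),
either pulls an arm or stops and outputs a set of arms.\<close>

datatype action = Pull nat | Stop "nat set"

text \<open>Reward-table model of the stochastic bandit: X (i, j) is the reward of
the (j+1)-th pull of arm i. hist P X k is the history after k steps of the policy P
(if the policy has stopped, the history no longer changes); its length is the
number of pulls made.\<close>

fun hist :: "((nat \<times> real) list \<Rightarrow> action) \<Rightarrow> (nat \<times> nat \<Rightarrow> real) \<Rightarrow> nat \<Rightarrow> (nat \<times> real) list" where
  "hist P X 0 = []"
| "hist P X (Suc k) =
     (let h = hist P X k in
      case P h of
        Pull i \<Rightarrow> h @ [(i, X (i, length (filter (\<lambda>p. fst p = i) h)))]
      | Stop T \<Rightarrow> h)"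

definition stopped :: "((nat \<times> real) list \<Rightarrow> action) \<Rightarrow> (nat \<times> nat \<Rightarrow> real) \<Rightarrow> nat \<Rightarrow> bool" where
  "stopped P X k \<longleftrightarrow> (\<exists>T. P (hist P X k) = Stop T)"

definition alg_output :: "((nat \<times> real) list \<Rightarrow> action) \<Rightarrow> (nat \<times> nat \<Rightarrow> real) \<Rightarrow> nat \<Rightarrow> nat set" where
  "alg_output P X k = (case P (hist P X k) of Stop T \<Rightarrow> T | Pull _ \<Rightarrow> {})"

text \<open>Joint law of reward table (arms in S) and the algorithm's internal random seed
(an i.i.d. sequence of uniform [0,1] variables).\<close>

definition bandit_space :: "nat set \<Rightarrow> (nat \<Rightarrow> real measure) \<Rightarrow> ((nat \<times> nat \<Rightarrow> real) \<times> (nat \<Rightarrow> real)) measure" where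
  "bandit_space S D =
     (PiM (S \<times> UNIV) (\<lambda>p. D (fst p))) \<Otimes>\<^sub>M (PiM UNIV (\<lambda>_. uniform_measure lborel {0..1::real}))"

definition arm_mean :: "real measure \<Rightarrow> real" where
  "arm_mean M = (\<integral>x. x \<partial>M)"

end

theory Submission
  imports Defs
begin


definition emp :: "(nat \<times> real) list \<Rightarrow> nat \<Rightarrow> real" where
  "emp h i = sum_list (map snd (filter (\<lambda>p. fst p = i) h))"

definition rnk :: "nat set \<Rightarrow> (nat \<Rightarrow> real) \<Rightarrow> nat \<Rightarrow> nat" where
  "rnk S e i = card {j\<in>S. e i < e j \<or> (e j = e i \<and> j < i)}"

definition topset :: "nat set \<Rightarrow> nat \<Rightarrow> (nat \<Rightarrow> real) \<Rightarrow> nat set" where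
  "topset S n e = {i\<in>S. rnk S e i < n}"

definition rr :: "nat set \<Rightarrow> nat \<Rightarrow> (nat \<times> real) list \<Rightarrow> action" where
  "rr S m h = (if length h < card S * m then Pull (sorted_list_of_set S ! (length h div m))
               else Stop (topset S (card S div 10) (emp h)))"

lemma rr_pull: "length h < card S * m \<Longrightarrow> rr S m h = Pull (sorted_list_of_set S ! (length h div m))"
  by (simp add: rr_def)
lemma rr_stop: "\<not> length h < card S * m \<Longrightarrow> rr S m h = Stop (topset S (card S div 10) (emp h))"
  by (simp add: rr_def)

lemma hist_filter:
  "map snd (filter (\<lambda>p. fst p = i) (hist P X k)) =
   map (\<lambda>j. X (i, j)) [0..<length (filter (\<lambda>p. fst p = i) (hist P X k))]"
proof (induction k)
  case 0
  then show ?case by simp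
next
  case (Suc k)
  show ?case
  proof (cases "P (hist P X k)")
    case (Pull i')
    then show ?thesis using Suc by (cases "i' = i") (auto simp: Let_def)
  next
    case (Stop T)
    then show ?thesis using Suc by (simp add: Let_def)
  qed
qed

lemma emp_hist:
  "emp (hist P X k) i = (\<Sum>j<length (filter (\<lambda>p. fst p = i) (hist P X k)). X (i, j))"
  unfolding emp_def by (subst hist_filter) (simp add: sum_list_sum_nth atLeast0LessThan)

lemma rr_fst:
  assumes "k \<le> card S * m"
  shows "map fst (hist (rr S m) X k) = map (\<lambda>q. sorted_list_of_set S ! (q div m)) [0..<k]"
  using assms
proof (induction k)
  case 0
  then show ?case by simp
next
  case (Suc k)
  have len: "length (hist (rr S m) X k) = k"
    using Suc by (metis Suc_leD length_map length_upt minus_nat.diff_0)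
  have "k < card S * m" using Suc by simp
  then show ?case using Suc len by (simp add: Let_def rr_pull)
qed

lemma rr_len:
  assumes "k \<le> card S * m"
  shows "length (hist (rr S m) X k) = k"
  using rr_fst[OF assms, of X] by (metis length_map length_upt minus_nat.diff_0)

lemma rr_after:
  assumes "card S * m \<le> k"
  shows "hist (rr S m) X k = hist (rr S m) X (card S * m)"
  using assms
proof (induction k rule: dec_induct)
  case base
  then show ?case by simp
next
  case (step j)
  then have "rr S m (hist (rr S m) X j) = Stop (topset S (card S div 10) (emp (hist (rr S m) X j)))"
    using rr_len[of "card S * m" S m X] by (intro rr_stop) simp
  then show ?case using step by (simp add: Let_def)
qed

lemma card_div_eq:
  assumes "m > 0" "r < n"
  shows "card {q. q < n * m \<and> q div m = r} = m"
proof -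
  have "{q. q < n * m \<and> q div m = r} = {r*m..<r*m+m}"
  proof (intro set_eqI iffI)
    fix q assume "q \<in> {q. q < n * m \<and> q div m = r}"
    then have qd: "q div m = r" by simp
    have "q = q div m * m + q mod m" by simp
    moreover have "q mod m < m" using assms(1) by simp
    ultimately show "q \<in> {r*m..<r*m+m}" using qd by simp
  next
    fix q assume q: "q \<in> {r*m..<r*m+m}"
    then have "q div m = r" by (intro div_nat_eqI) (auto simp: mult.commute)
    moreover have "r * m + m \<le> n * m" using assms by (metis Suc_leI add.commute mult_Suc mult_le_mono1)
    then have "q < n * m" using q by simp
    ultimately show "q \<in> {q. q < n * m \<and> q div m = r}" by simp
  qed
  then show ?thesis by simp
qed

lemma rr_count:
  assumes "finite S" "i \<in> S" "m > 0"
  shows "length (filter (\<lambda>p. fst p = i) (hist (rr S m) X (card S * m))) = m"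
proof -
  define L where "L = sorted_list_of_set S"
  have dL: "distinct L" and lenL: "length L = card S" and setL: "set L = S"
    using assms by (auto simp: L_def)
  obtain r where r: "r < card S" "L ! r = i"
    using assms(2) setL lenL by (metis in_set_conv_nth)
  have "length (filter (\<lambda>p. fst p = i) (hist (rr S m) X (card S * m)))
      = length (filter (\<lambda>x. x = i) (map fst (hist (rr S m) X (card S * m))))"
    by (simp add: filter_map o_def)
  also have "\<dots> = length (filter (\<lambda>q. L ! (q div m) = i) [0..<card S * m])"
    by (simp add: rr_fst L_def filter_map o_def)
  also have "\<dots> = card {q. q < card S * m \<and> L ! (q div m) = i}"
    by (simp add: length_filter_conv_card cong: conj_cong)
  also have "{q. q < card S * m \<and> L ! (q div m) = i} = {q. q < card S * m \<and> q div m = r}"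
  proof -
    have "q div m < card S" if "q < card S * m" for q
      using that assms(3) by (simp add: less_mult_imp_div_less)
    then show ?thesis using r dL lenL by (auto simp: nth_eq_iff_index_eq)
  qed
  also have "card \<dots> = m" using card_div_eq[OF assms(3) r(1)] .
  finally show ?thesis .
qed

lemma rnk_cong:
  assumes "\<And>i. i \<in> S \<Longrightarrow> e i = e' i" "i \<in> S"
  shows "rnk S e i = rnk S e' i"
proof -
  have "{j\<in>S. e i < e j \<or> (e j = e i \<and> j < i)} = {j\<in>S. e' i < e' j \<or> (e' j = e' i \<and> j < i)}"
    using assms by auto
  then show ?thesis by (simp add: rnk_def)
qed

lemma topset_cong:
  assumes "\<And>i. i \<in> S \<Longrightarrow> e i = e' i"
  shows "topset S n e = topset S n e'"
proof -
  have "rnk S e i = rnk S e' i" if "i \<in> S" for i using rnk_cong[OF assms that] .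
  then show ?thesis unfolding topset_def by auto
qed

lemma rr_output:
  assumes "finite S" "m > 0" "card S * m \<le> N"
  shows "alg_output (rr S m) X N = topset S (card S div 10) (\<lambda>i. \<Sum>j<m. X (i, j))"
    and "stopped (rr S m) X N"
proof -
  have h: "hist (rr S m) X N = hist (rr S m) X (card S * m)"
    using rr_after[OF assms(3)] .
  have len: "length (hist (rr S m) X N) = card S * m" unfolding h by (rule rr_len) simp
  have st: "rr S m (hist (rr S m) X N) = Stop (topset S (card S div 10) (emp (hist (rr S m) X N)))"
    using len by (intro rr_stop) simp
  have "topset S (card S div 10) (emp (hist (rr S m) X N)) = topset S (card S div 10) (\<lambda>i. \<Sum>j<m. X (i, j))"
  proof (rule topset_cong)
    fix i assume i: "i \<in> S"
    have "emp (hist (rr S m) X N) i = (\<Sum>j<length (filter (\<lambda>p. fst p = i) (hist (rr S m) X N)). X (i, j))"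
      by (rule emp_hist)
    also have "length (filter (\<lambda>p. fst p = i) (hist (rr S m) X N)) = m"
      unfolding h using rr_count[OF assms(1) i assms(2)] .
    finally show "emp (hist (rr S m) X N) i = (\<Sum>j<m. X (i, j))" .
  qed
  then show "alg_output (rr S m) X N = topset S (card S div 10) (\<lambda>i. \<Sum>j<m. X (i, j))"
    using st by (simp add: alg_output_def)
  show "stopped (rr S m) X N" using st by (simp add: stopped_def)
qed




lemma rnk_less:
  assumes "finite S" "x \<in> S" "y \<in> S" "e x < e y \<or> (e y = e x \<and> y < x)"
  shows "rnk S e y < rnk S e x"
proof -
  let ?A = "{j\<in>S. e y < e j \<or> (e j = e y \<and> j < y)}"
  let ?B = "{j\<in>S. e x < e j \<or> (e j = e x \<and> j < x)}"
  have "?A \<subseteq> ?B" using assms(4) by auto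
  moreover have "y \<in> ?B" "y \<notin> ?A" using assms by auto
  ultimately have "?A \<subset> ?B" by blast
  then show ?thesis unfolding rnk_def using assms(1) by (intro psubset_card_mono) auto
qed

lemma rnk_bound:
  assumes "finite S" "x \<in> S"
  shows "rnk S e x < card S"
proof -
  have "{j\<in>S. e x < e j \<or> (e j = e x \<and> j < x)} \<subset> S" using assms by auto
  then show ?thesis unfolding rnk_def using assms(1) by (intro psubset_card_mono) auto
qed

lemma rnk_inj:
  assumes "finite S"
  shows "inj_on (rnk S e) S"
proof (rule inj_onI)
  fix x y assume xy: "x \<in> S" "y \<in> S" "rnk S e x = rnk S e y"
  show "x = y"
  proof (rule ccontr)
    assume "x \<noteq> y"
    then have "(e x < e y \<or> (e y = e x \<and> y < x)) \<or> (e y < e x \<or> (e x = e y \<and> x < y))" by linarith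
    then show False using rnk_less[OF assms xy(1,2), of e] rnk_less[OF assms xy(2,1), of e] xy(3) by linarith
  qed
qed

lemma rnk_bij:
  assumes "finite S"
  shows "bij_betw (rnk S e) S {..<card S}"
proof -
  have "rnk S e ` S \<subseteq> {..<card S}" using rnk_bound[OF assms] by auto
  moreover have "card (rnk S e ` S) = card {..<card S}"
    using card_image[OF rnk_inj[OF assms]] by simp
  ultimately have "rnk S e ` S = {..<card S}" by (intro card_subset_eq) auto
  then show ?thesis using rnk_inj[OF assms] by (simp add: bij_betw_def)
qed

lemma topset_sub: "topset S n e \<subseteq> S"
  unfolding topset_def by auto

lemma topset_card:
  assumes "finite S" "n \<le> card S"
  shows "card (topset S n e) = n"
proof -
  have "rnk S e ` topset S n e = {..<n}"
  proof
    show "rnk S e ` topset S n e \<subseteq> {..<n}" unfolding topset_def by auto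
    show "{..<n} \<subseteq> rnk S e ` topset S n e"
    proof
      fix k assume "k \<in> {..<n}"
      then have "k \<in> rnk S e ` S" using rnk_bij[OF assms(1), of e] assms(2)
        by (auto simp: bij_betw_def)
      then obtain x where "x \<in> S" "k = rnk S e x" by auto
      then show "k \<in> rnk S e ` topset S n e" using \<open>k \<in> {..<n}\<close> unfolding topset_def by auto
    qed
  qed
  moreover have "inj_on (rnk S e) (topset S n e)"
    using rnk_inj[OF assms(1)] topset_sub by (metis inj_on_subset)
  ultimately show ?thesis by (metis card_image card_lessThan)
qed

lemma topset_order:
  assumes "finite S" "x \<in> topset S n e" "y \<in> S" "y \<notin> topset S n e"
  shows "e y \<le> e x"
proof (rule ccontr)
  assume "\<not> e y \<le> e x"
  then have "rnk S e y < rnk S e x" using assms topset_sub by (intro rnk_less) auto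
  then show False using assms unfolding topset_def by auto
qed




lemma fail_count:
  fixes e :: "nat \<Rightarrow> real"
  assumes fin: "finite S" and tp: "tp \<subseteq> S" and bd: "bd \<subseteq> S" and disj: "tp \<inter> bd = {}"
    and TS: "T \<subseteq> S" and cT: "card T = n"
    and ord: "\<And>x y. x \<in> T \<Longrightarrow> y \<in> S \<Longrightarrow> y \<notin> T \<Longrightarrow> e y \<le> e x"
    and fail: "real (card (T \<inter> bd)) > g"
  shows "real (card {i\<in>tp. e i \<le> t}) + real (card {i\<in>bd. t < e i}) > min g (real (card tp) - real n)"
proof (cases "n \<le> card {i\<in>tp. t < e i}")
  case True
  have sub: "T \<inter> bd \<subseteq> {i\<in>bd. t < e i}"
  proof
    fix b assume b: "b \<in> T \<inter> bd"
    have "\<not> {i\<in>tp. t < e i} \<subseteq> T"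
    proof
      assume "{i\<in>tp. t < e i} \<subseteq> T"
      moreover have "b \<notin> {i\<in>tp. t < e i}" using b disj by auto
      ultimately have "insert b {i\<in>tp. t < e i} \<subseteq> T" using b by auto
      then have "card (insert b {i\<in>tp. t < e i}) \<le> card T"
        using fin TS by (intro card_mono) (auto intro: finite_subset)
      moreover have "card (insert b {i\<in>tp. t < e i}) = Suc (card {i\<in>tp. t < e i})"
        using \<open>b \<notin> {i\<in>tp. t < e i}\<close> fin tp by (intro card_insert_disjoint) (auto intro: finite_subset)
      ultimately show False using True cT by simp
    qed
    then obtain g0 where g0: "g0 \<in> tp" "t < e g0" "g0 \<notin> T" by auto
    have "e g0 \<le> e b" using ord[of b g0] b g0 tp by auto
    then show "b \<in> {i\<in>bd. t < e i}" using b g0 by auto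
  qed
  have "card (T \<inter> bd) \<le> card {i\<in>bd. t < e i}"
    using fin bd by (intro card_mono[OF _ sub]) (auto intro: finite_subset)
  then show ?thesis using fail by linarith
next
  case False
  have ftp: "finite tp" using fin tp by (auto intro: finite_subset)
  have "card {i\<in>tp. e i \<le> t} + card {i\<in>tp. t < e i} = card tp"
  proof -
    have "{i\<in>tp. e i \<le> t} \<union> {i\<in>tp. t < e i} = tp" by auto
    moreover have "{i\<in>tp. e i \<le> t} \<inter> {i\<in>tp. t < e i} = {}" by auto
    ultimately show ?thesis using ftp by (metis (no_types, lifting) card_Un_disjoint finite_Un)
  qed
  then have "real (card {i\<in>tp. e i \<le> t}) > real (card tp) - real n" using False by linarith
  then show ?thesis by linarith
qed




definition Mx :: "nat set \<Rightarrow> (nat \<Rightarrow> real measure) \<Rightarrow> nat \<times> nat \<Rightarrow> real measure" where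
  "Mx S D p = (if fst p \<in> S then D (fst p) else return borel 0)"

lemma Mx_pps:
  assumes "\<forall>i\<in>S. prob_space (D i)"
  shows "product_prob_space (Mx S D)"
  by (rule product_prob_spaceI) (auto simp: Mx_def assms prob_space_return)

lemma Mx_sets:
  assumes "\<forall>i\<in>S. sets (D i) = sets borel"
  shows "sets (Mx S D p) = sets borel"
  using assms by (auto simp: Mx_def)

lemma M1_eq: "PiM (S \<times> UNIV) (\<lambda>p. D (fst p)) = PiM (S \<times> UNIV) (Mx S D)"
  by (rule PiM_cong) (auto simp: Mx_def)

lemma indep_coord:
  assumes pps: "product_prob_space M'" and sb: "\<And>p. sets (M' p) = sets borel"
    and J: "finite J" "J \<subseteq> I" "J \<noteq> {}"
  shows "prob_space.indep_vars (PiM I M') (\<lambda>_. borel) (\<lambda>p x. x p) J"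
proof -
  interpret product_prob_space M' I by (rule pps)
  have rv: "random_variable borel (\<lambda>x. x p)" if "p \<in> J" for p
  proof -
    have "(\<lambda>x. x p) \<in> measurable (PiM I M') (M' p)" using that J by (intro measurable_component_singleton) auto
    then show ?thesis using measurable_cong_sets[OF refl sb[of p], of "PiM I M'"] by simp
  qed
  have comp: "distr (PiM I M') borel (\<lambda>x. x p) = M' p" if "p \<in> J" for p
  proof -
    have "distr (PiM I M') borel (\<lambda>x. x p) = distr (PiM I M') (M' p) (\<lambda>x. x p)"
      by (intro distr_cong refl) (simp add: sb)
    also have "\<dots> = M' p" using that J by (intro PiM_component) auto
    finally show ?thesis .
  qed
  show ?thesis
  proof (subst indep_vars_iff_distr_eq_PiM')
    show "J \<noteq> {}" by fact
    show "\<And>i. i \<in> J \<Longrightarrow> random_variable borel (\<lambda>x. x i)" by (rule rv)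
    have "distr (PiM I M') (PiM J (\<lambda>_. borel)) (\<lambda>x. \<lambda>i\<in>J. x i) = distr (PiM I M') (PiM J M') (\<lambda>x. restrict x J)"
      by (intro distr_cong refl sets_PiM_cong) (simp_all add: sb)
    also have "\<dots> = PiM J M'" using J by (intro distr_PiM_restrict_finite) auto
    also have "\<dots> = PiM J (\<lambda>i. distr (PiM I M') borel (\<lambda>x. x i))"
      by (rule PiM_cong) (auto simp: comp)
    finally show "distr (PiM I M') (PiM J (\<lambda>_. borel)) (\<lambda>x. \<lambda>i\<in>J. x i) = PiM J (\<lambda>i. distr (PiM I M') borel (\<lambda>x. x i))" .
  qed
qed




lemma arm_hoeffding:
  fixes D :: "nat \<Rightarrow> real measure"
  assumes DS: "\<forall>i\<in>S. prob_space (D i) \<and> sets (D i) = sets borel \<and> measure (D i) {0..1} = 1"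
    and i: "i \<in> S" and m: "m > 0" and eps: "\<epsilon> \<ge> 0"
  shows "measure (PiM (S \<times> UNIV) (\<lambda>p. D (fst p))) {x\<in>space (PiM (S \<times> UNIV) (\<lambda>p. D (fst p))). real m * arm_mean (D i) + \<epsilon> \<le> (\<Sum>j<m. x (i, j))} \<le> exp (-2*\<epsilon>\<^sup>2/real m)"
    and "measure (PiM (S \<times> UNIV) (\<lambda>p. D (fst p))) {x\<in>space (PiM (S \<times> UNIV) (\<lambda>p. D (fst p))). (\<Sum>j<m. x (i, j)) \<le> real m * arm_mean (D i) - \<epsilon>} \<le> exp (-2*\<epsilon>\<^sup>2/real m)"
proof -
  let ?M = "PiM (S \<times> UNIV) (Mx S D)"
  have pps: "product_prob_space (Mx S D)" using DS by (intro Mx_pps) auto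
  have sb: "\<And>p. sets (Mx S D p) = sets borel" using DS by (intro Mx_sets) auto
  interpret product_prob_space "Mx S D" "S \<times> UNIV" by (rule pps)
  define J where "J = {i} \<times> {..<m}"
  have J: "finite J" "J \<subseteq> S \<times> UNIV" "J \<noteq> {}" using i m by (auto simp: J_def)
  have ind: "indep_vars (\<lambda>_. borel) (\<lambda>p x. x p) J"
    by (rule indep_coord[OF pps sb J])
  have Di: "prob_space (D i)" "sets (D i) = sets borel" "measure (D i) {0..1} = 1" using DS i by auto
  have AE01: "AE x in ?M. x p \<in> {0..1}" if "p \<in> J" for p
  proof -
    have "fst p = i" using that by (auto simp: J_def)
    then have Mp: "Mx S D p = D i" using i by (simp add: Mx_def)
    have "AE y in Mx S D p. y \<in> {0..1}" unfolding Mp using prob_space.AE_prob_1[OF Di(1) Di(3)] .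
    then show ?thesis by (rule AE_component[rotated]) (use that J in auto)
  qed
  have expc: "expectation (\<lambda>x. x p) = arm_mean (D i)" if "p \<in> J" for p
  proof -
    have "fst p = i" using that by (auto simp: J_def)
    then have Mp: "Mx S D p = D i" using i by (simp add: Mx_def)
    have meas: "(\<lambda>x. x p) \<in> measurable ?M (Mx S D p)" using that J by (intro measurable_component_singleton) auto
    have dis: "distr ?M (Mx S D p) (\<lambda>x. x p) = Mx S D p" using that J by (intro PiM_component) auto
    have bm: "(\<lambda>y::real. y) \<in> borel_measurable (Mx S D p)"
      by (subst measurable_cong_sets[OF sb refl]) simp
    have "arm_mean (D i) = integral\<^sup>L (Mx S D p) (\<lambda>y. y)" by (simp add: Mp arm_mean_def)
    also have "\<dots> = integral\<^sup>L (distr ?M (Mx S D p) (\<lambda>x. x p)) (\<lambda>y. y)" by (simp only: dis)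
    also have "\<dots> = expectation (\<lambda>x. x p)"
      by (rule integral_distr[OF meas bm])
    finally show ?thesis by simp
  qed
  define \<mu> where "\<mu> = (\<Sum>p\<in>J. expectation (\<lambda>x. x p))"
  interpret H: Hoeffding_ineq ?M J "\<lambda>p x. x p" "\<lambda>_. 0" "\<lambda>_. 1" \<mu>
    by unfold_locales ((rule J(1) ind AE01 | simp add: \<mu>_def); fact?)+
  have mu: "\<mu> = real m * arm_mean (D i)"
  proof -
    have "\<mu> = (\<Sum>p\<in>J. arm_mean (D i))" unfolding \<mu>_def by (rule sum.cong) (auto intro: expc)
    also have "\<dots> = real m * arm_mean (D i)" by (simp add: J_def card_cartesian_product)
    finally show ?thesis .
  qed
  have sumJ: "(\<Sum>p\<in>J. x p) = (\<Sum>j<m. x (i, j))" for x :: "nat \<times> nat \<Rightarrow> real"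
  proof -
    have "J = Pair i ` {..<m}" by (auto simp: J_def)
    then show ?thesis by (simp add: sum.reindex inj_on_def)
  qed
  have pos: "(\<Sum>p\<in>J. ((\<lambda>_. 1::real) p - (\<lambda>_. 0) p)\<^sup>2) > 0" using J by (simp add: card_gt_0_iff)
  have cJ: "(\<Sum>p\<in>J. ((\<lambda>_. 1::real) p - (\<lambda>_. 0) p)\<^sup>2) = real m" by (simp add: J_def)
  have eqM: "PiM (S \<times> UNIV) (\<lambda>p. D (fst p)) = ?M" by (rule M1_eq)
  show "measure (PiM (S \<times> UNIV) (\<lambda>p. D (fst p))) {x\<in>space (PiM (S \<times> UNIV) (\<lambda>p. D (fst p))). real m * arm_mean (D i) + \<epsilon> \<le> (\<Sum>j<m. x (i, j))} \<le> exp (-2*\<epsilon>\<^sup>2/real m)"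
    using H.Hoeffding_ineq_ge[OF eps pos] unfolding eqM cJ sumJ mu .
  show "measure (PiM (S \<times> UNIV) (\<lambda>p. D (fst p))) {x\<in>space (PiM (S \<times> UNIV) (\<lambda>p. D (fst p))). (\<Sum>j<m. x (i, j)) \<le> real m * arm_mean (D i) - \<epsilon>} \<le> exp (-2*\<epsilon>\<^sup>2/real m)"
    using H.Hoeffding_ineq_le[OF eps pos] unfolding eqM cJ sumJ mu .
qed




lemma comp_meas:
  assumes DS: "\<forall>i\<in>S. sets (D i) = sets borel"
  shows "(\<lambda>x. x p) \<in> borel_measurable (PiM (S \<times> UNIV) (\<lambda>p. D (fst p)))"
proof (cases "p \<in> S \<times> UNIV")
  case True
  have "(\<lambda>x. x p) \<in> measurable (PiM (S \<times> UNIV) (\<lambda>p. D (fst p))) (D (fst p))"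
    using True by (intro measurable_component_singleton) auto
  moreover have "measurable (PiM (S \<times> UNIV) (\<lambda>p. D (fst p))) (D (fst p)) = borel_measurable (PiM (S \<times> UNIV) (\<lambda>p. D (fst p)))"
    by (rule measurable_cong_sets) (use True DS in auto)
  ultimately show ?thesis by metis
next
  case False
  have eqs: "\<And>w. w \<in> space (PiM (S \<times> UNIV) (\<lambda>p. D (fst p))) \<Longrightarrow> w p = undefined"
    using False by (cases p) (auto simp: space_PiM PiE_def extensional_def)
  then show ?thesis
    using measurable_cong[of "PiM (S \<times> UNIV) (\<lambda>p. D (fst p))" "\<lambda>x. x p" "\<lambda>_. undefined" borel] by simp
qed




lemma card_filter_sum:
  assumes "finite A"
  shows "real (card {x\<in>A. P x}) = (\<Sum>x\<in>A. if P x then 1 else 0)"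
  using sum.inter_filter[OF assms, of "\<lambda>_. 1::real" P] by simp

lemma main_prob:
  fixes D :: "nat \<Rightarrow> real measure" and S tp bd :: "nat set" and t \<phi> g \<delta> :: real
  defines "M1 \<equiv> PiM (S \<times> UNIV) (\<lambda>p. D (fst p))"
  assumes DS: "\<forall>i\<in>S. prob_space (D i) \<and> sets (D i) = sets borel \<and> measure (D i) {0..1} = 1"
    and fin: "finite S" and m: "m > 0" and tp: "tp \<subseteq> S" and bd: "bd \<subseteq> S" and disj: "tp \<inter> bd = {}"
    and mtp: "\<And>i. i \<in> tp \<Longrightarrow> t + \<phi>/2 \<le> arm_mean (D i)"
    and mbd: "\<And>i. i \<in> bd \<Longrightarrow> arm_mean (D i) \<le> t - \<phi>/2"
    and phi: "\<phi> > 0" and nS: "n \<le> card S"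
    and apos: "min g (real (card tp) - real n) > 0"
    and bound: "real (card S) * exp (- (real m * \<phi>\<^sup>2 / 2)) / min g (real (card tp) - real n) \<le> \<delta>"
  shows "1 - \<delta> \<le> measure M1 {x \<in> space M1. let T = topset S n (\<lambda>i. \<Sum>j<m. x (i, j)) in
            T \<subseteq> S \<and> card T = n \<and> real (card (T \<inter> bd)) \<le> g}"
proof -
  interpret pp: product_prob_space "Mx S D" "S \<times> UNIV" using DS by (intro Mx_pps) auto
  have "prob_space M1" unfolding M1_def M1_eq by (rule pp.P.prob_space_axioms)
  then interpret M1: prob_space M1 .
  have cm[measurable]: "(\<lambda>x. x p) \<in> borel_measurable M1" for p
    unfolding M1_def using DS by (intro comp_meas) auto
  define a where "a = min g (real (card tp) - real n)"
  define pb where "pb = exp (- (real m * \<phi>\<^sup>2 / 2))"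
  define A where "A i = {x\<in>space M1. (\<Sum>j<m. x (i, j)) \<le> real m * t}" for i
  define B where "B i = {x\<in>space M1. real m * t < (\<Sum>j<m. x (i, j))}" for i
  have Am[measurable]: "A i \<in> sets M1" for i unfolding A_def by measurable
  have Bm[measurable]: "B i \<in> sets M1" for i unfolding B_def by measurable
  have epsq: "-2 * (real m * \<phi> / 2)\<^sup>2 / real m = - (real m * \<phi>\<^sup>2 / 2)"
    using m by (simp add: power2_eq_square field_simps)
  have PA: "measure M1 (A i) \<le> pb" if i: "i \<in> tp" for i
  proof -
    have "A i \<subseteq> {x\<in>space M1. (\<Sum>j<m. x (i, j)) \<le> real m * arm_mean (D i) - real m * \<phi> / 2}"
    proof -
      have "real m * t \<le> real m * arm_mean (D i) - real m * \<phi> / 2"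
        using mult_left_mono[OF mtp[OF i], of "real m"] by (simp add: algebra_simps)
      then show ?thesis unfolding A_def by auto
    qed
    then have "measure M1 (A i) \<le> measure M1 {x\<in>space M1. (\<Sum>j<m. x (i, j)) \<le> real m * arm_mean (D i) - real m * \<phi> / 2}"
      by (intro M1.finite_measure_mono) measurable
    also have "\<dots> \<le> exp (-2 * (real m * \<phi> / 2)\<^sup>2 / real m)"
      unfolding M1_def using arm_hoeffding(2)[OF DS _ m, of i "real m * \<phi> / 2"] i tp phi by auto
    finally show ?thesis unfolding pb_def epsq .
  qed
  have PB: "measure M1 (B i) \<le> pb" if i: "i \<in> bd" for i
  proof -
    have "B i \<subseteq> {x\<in>space M1. real m * arm_mean (D i) + real m * \<phi> / 2 \<le> (\<Sum>j<m. x (i, j))}"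
    proof -
      have "real m * arm_mean (D i) + real m * \<phi> / 2 \<le> real m * t"
        using mult_left_mono[OF mbd[OF i], of "real m"] by (simp add: algebra_simps)
      then show ?thesis unfolding B_def by auto
    qed
    then have "measure M1 (B i) \<le> measure M1 {x\<in>space M1. real m * arm_mean (D i) + real m * \<phi> / 2 \<le> (\<Sum>j<m. x (i, j))}"
      by (intro M1.finite_measure_mono) measurable
    also have "\<dots> \<le> exp (-2 * (real m * \<phi> / 2)\<^sup>2 / real m)"
      unfolding M1_def using arm_hoeffding(1)[OF DS _ m, of i "real m * \<phi> / 2"] i bd phi by auto
    finally show ?thesis unfolding pb_def epsq .
  qed
  define Z where "Z x = (\<Sum>i\<in>tp. indicator (A i) x) + (\<Sum>i\<in>bd. indicator (B i) x :: real)" for x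
  have intA: "integrable M1 (indicator (A i) :: _ \<Rightarrow> real)" for i
    by (simp add: integrable_indicator_iff Int_absorb2 sets.sets_into_space M1.emeasure_eq_measure)
  have intB: "integrable M1 (indicator (B i) :: _ \<Rightarrow> real)" for i
    by (simp add: integrable_indicator_iff Int_absorb2 sets.sets_into_space M1.emeasure_eq_measure)
  have intZ: "integrable M1 Z" unfolding Z_def using intA intB by auto
  have ftp: "finite tp" "finite bd" using fin tp bd by (auto intro: finite_subset)
  have EZ: "(\<integral>x. Z x \<partial>M1) \<le> real (card S) * pb"
  proof -
    have "(\<integral>x. Z x \<partial>M1) = (\<Sum>i\<in>tp. measure M1 (A i)) + (\<Sum>i\<in>bd. measure M1 (B i))"
      unfolding Z_def using intA intB
      by (simp add: integral_sum Int_absorb2 sets.sets_into_space)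
    also have "\<dots> \<le> (\<Sum>i\<in>tp. pb) + (\<Sum>i\<in>bd. pb)"
      using PA PB by (intro add_mono sum_mono) auto
    also have "\<dots> = real (card tp + card bd) * pb" by (simp add: algebra_simps)
    also have "\<dots> \<le> real (card S) * pb"
    proof -
      have "card tp + card bd = card (tp \<union> bd)" using ftp disj by (simp add: card_Un_disjoint)
      also have "\<dots> \<le> card S" using fin tp bd by (intro card_mono) auto
      finally show ?thesis by (simp add: pb_def mult_right_mono)
    qed
    finally show ?thesis .
  qed
  have apos': "a > 0" using apos by (simp add: a_def)
  have Zm[measurable]: "Z \<in> borel_measurable M1" unfolding Z_def by measurable
  have mk: "measure M1 {x\<in>space M1. a \<le> Z x} \<le> \<delta>"
  proof -
    have "measure M1 {x\<in>space M1. a \<le> Z x} \<le> (\<integral>x. Z x \<partial>M1) / a"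
      by (rule integral_Markov_inequality_measure[OF intZ _ _ apos', of "space M1"]) (auto simp: Z_def sum_nonneg)
    also have "\<dots> \<le> real (card S) * pb / a" using EZ apos' by (simp add: divide_right_mono)
    also have "\<dots> \<le> \<delta>" using bound by (simp add: pb_def a_def)
    finally show ?thesis .
  qed
  define Q where "Q = {x \<in> space M1. let T = topset S n (\<lambda>i. \<Sum>j<m. x (i, j)) in
            T \<subseteq> S \<and> card T = n \<and> real (card (T \<inter> bd)) \<le> g}"
  define E where "E i x = (\<Sum>l<m. x (i, l))" for i and x :: "nat \<times> nat \<Rightarrow> real"
  have Em[measurable]: "E i \<in> borel_measurable M1" for i unfolding E_def by measurable
  define R where "R x = (\<Sum>i\<in>bd. if (\<Sum>j\<in>S. if E i x < E j x \<or> (\<not> E i x < E j x \<and> \<not> E j x < E i x \<and> j < i) then 1 else 0) < real n then 1 else (0::real))" for x :: "nat \<times> nat \<Rightarrow> real"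
  have Rm[measurable]: "R \<in> borel_measurable M1" unfolding R_def by measurable
  have crd: "real (card (topset S n e \<inter> bd)) = (\<Sum>i\<in>bd. if (\<Sum>j\<in>S. if e i < e j \<or> (\<not> e i < e j \<and> \<not> e j < e i \<and> j < i) then 1 else 0) < real n then 1 else (0::real))" for e
  proof -
    have "topset S n e \<inter> bd = {i\<in>bd. rnk S e i < n}" using bd unfolding topset_def by auto
    moreover have rk: "real (rnk S e i) = (\<Sum>j\<in>S. if e i < e j \<or> (\<not> e i < e j \<and> \<not> e j < e i \<and> j < i) then 1 else 0)" for i
    proof -
      have "{j\<in>S. e i < e j \<or> (e j = e i \<and> j < i)} = {j\<in>S. e i < e j \<or> (\<not> e i < e j \<and> \<not> e j < e i \<and> j < i)}"
        by (auto simp: not_less)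
      then show ?thesis unfolding rnk_def by (simp add: card_filter_sum[OF fin])
    qed
    moreover have "(rnk S e i < n) = ((\<Sum>j\<in>S. if e i < e j \<or> (\<not> e i < e j \<and> \<not> e j < e i \<and> j < i) then 1 else 0) < real n)" for i
      using rk[of i] by (metis of_nat_less_iff)
    ultimately show ?thesis using card_filter_sum[OF ftp(2), of "\<lambda>i. rnk S e i < n"]
      by simp
  qed
  have QR: "Q = {x\<in>space M1. R x \<le> g}"
  proof -
    have "(let T = topset S n (\<lambda>i. \<Sum>j<m. x (i, j)) in T \<subseteq> S \<and> card T = n \<and> real (card (T \<inter> bd)) \<le> g)
          \<longleftrightarrow> R x \<le> g" for x
    proof -
      have "(\<lambda>i. \<Sum>j<m. x (i, j)) = (\<lambda>i. E i x)" by (simp add: E_def)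
      then show ?thesis unfolding Let_def R_def
        using topset_sub[of S n "\<lambda>i. E i x"] topset_card[OF fin nS, of "\<lambda>i. E i x"] crd[of "\<lambda>i. E i x"]
        by simp
    qed
    then show ?thesis unfolding Q_def by blast
  qed
  have Qm: "Q \<in> sets M1" unfolding QR by measurable
  have GQ: "space M1 - {x\<in>space M1. a \<le> Z x} \<subseteq> Q"
  proof
    fix x assume x: "x \<in> space M1 - {x\<in>space M1. a \<le> Z x}"
    define e where "e i = (\<Sum>j<m. x (i, j))" for i
    define T where "T = topset S n e"
    have Zx: "Z x = real (card {i\<in>tp. e i \<le> real m * t}) + real (card {i\<in>bd. real m * t < e i})"
    proof -
      have "(\<Sum>i\<in>tp. indicator (A i) x) = (\<Sum>i\<in>tp. if e i \<le> real m * t then 1 else (0::real))"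
        using x by (intro sum.cong) (auto simp: A_def e_def indicator_def)
      moreover have "(\<Sum>i\<in>bd. indicator (B i) x) = (\<Sum>i\<in>bd. if real m * t < e i then 1 else (0::real))"
        using x by (intro sum.cong) (auto simp: B_def e_def indicator_def)
      ultimately show ?thesis unfolding Z_def
        using card_filter_sum[OF ftp(1), of "\<lambda>i. e i \<le> real m * t"] card_filter_sum[OF ftp(2), of "\<lambda>i. real m * t < e i"] by simp
    qed
    have "real (card (T \<inter> bd)) \<le> g"
    proof (rule ccontr)
      assume "\<not> real (card (T \<inter> bd)) \<le> g"
      then have "real (card {i\<in>tp. e i \<le> real m * t}) + real (card {i\<in>bd. real m * t < e i}) > a"
        unfolding a_def
        by (intro fail_count[OF fin tp bd disj topset_sub topset_card[OF fin nS]])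
           (auto simp: T_def intro: topset_order[OF fin])
      then show False using x Zx by auto
    qed
    then show "x \<in> Q" using x topset_sub topset_card[OF fin nS] unfolding Q_def T_def e_def by (auto simp: Let_def)
  qed
  have "1 - \<delta> \<le> 1 - measure M1 {x\<in>space M1. a \<le> Z x}" using mk by simp
  also have "\<dots> = measure M1 (space M1 - {x\<in>space M1. a \<le> Z x})"
    by (rule M1.prob_compl[symmetric]) measurable
  also have "\<dots> \<le> measure M1 Q" by (rule M1.finite_measure_mono[OF GQ Qm])
  finally show ?thesis unfolding Q_def .
qed




definition msamp :: "real \<Rightarrow> real \<Rightarrow> real \<Rightarrow> nat" where
  "msamp \<gamma> \<delta> \<phi> = nat \<lceil>8 * (ln (1/\<gamma>) + ln (1/\<delta>)) / \<phi>\<^sup>2\<rceil>"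

lemma numeric:
  fixes \<gamma> \<delta> \<phi> :: real
  assumes g: "0 < \<gamma>" "\<gamma> \<le> 1/2" and d: "0 < \<delta>" "\<delta> \<le> 1/2" and p: "0 < \<phi>" "\<phi> \<le> 1"
  shows "1 \<le> ln (1/\<gamma>) + ln (1/\<delta>)"
    and "1 \<le> 8 * (ln (1/\<gamma>) + ln (1/\<delta>)) / \<phi>\<^sup>2"
    and "msamp \<gamma> \<delta> \<phi> > 0"
    and "real (msamp \<gamma> \<delta> \<phi>) \<le> 8 * (ln (1/\<gamma>) + ln (1/\<delta>)) / \<phi>\<^sup>2 + 1"
    and "exp (- (real (msamp \<gamma> \<delta> \<phi>) * \<phi>\<^sup>2 / 2)) \<le> (\<gamma> * \<delta>)^4"
proof -
  define L where "L = ln (1/\<gamma>) + ln (1/\<delta>)"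
  have lg: "ln (1/\<gamma>) = - ln \<gamma>" "ln (1/\<delta>) = - ln \<delta>" using g d by (simp_all add: ln_div)
  have "ln \<gamma> \<le> \<gamma> - 1" "ln \<delta> \<le> \<delta> - 1" using g d by (simp_all add: ln_le_minus_one)
  then show L1: "1 \<le> ln (1/\<gamma>) + ln (1/\<delta>)" using lg g d by linarith
  have phi2: "0 < \<phi>\<^sup>2" "\<phi>\<^sup>2 \<le> 1" using p by (simp_all add: power_le_one)
  have "8 * L \<le> 8 * L / \<phi>\<^sup>2"
    using phi2 L1 by (simp add: L_def le_divide_eq mult_le_cancel_left1)
  moreover have "1 \<le> 8 * L" using L1 by (simp add: L_def)
  ultimately have "1 \<le> 8 * L / \<phi>\<^sup>2" by linarith
  then show L8: "1 \<le> 8 * (ln (1/\<gamma>) + ln (1/\<delta>)) / \<phi>\<^sup>2" unfolding L_def .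
  show "msamp \<gamma> \<delta> \<phi> > 0" unfolding msamp_def using L8 by simp
  show "real (msamp \<gamma> \<delta> \<phi>) \<le> 8 * (ln (1/\<gamma>) + ln (1/\<delta>)) / \<phi>\<^sup>2 + 1"
    unfolding msamp_def using L8 by linarith
  have mge: "8 * L / \<phi>\<^sup>2 \<le> real (msamp \<gamma> \<delta> \<phi>)" unfolding msamp_def L_def
    using L8 by linarith
  then have "8 * L \<le> real (msamp \<gamma> \<delta> \<phi>) * \<phi>\<^sup>2" using phi2 by (simp add: divide_le_eq)
  then have "exp (- (real (msamp \<gamma> \<delta> \<phi>) * \<phi>\<^sup>2 / 2)) \<le> exp (real 4 * ln \<gamma> + real 4 * ln \<delta>)"
    using lg unfolding L_def by simp
  also have "\<dots> = (\<gamma> * \<delta>)^4"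
  proof -
    have "exp (real 4 * ln \<gamma>) = \<gamma>^4" by (simp only: exp_of_nat_mult exp_ln[OF g(1)])
    moreover have "exp (real 4 * ln \<delta>) = \<delta>^4" by (simp only: exp_of_nat_mult exp_ln[OF d(1)])
    ultimately show ?thesis by (simp only: exp_add power_mult_distrib)
  qed
  finally show "exp (- (real (msamp \<gamma> \<delta> \<phi>) * \<phi>\<^sup>2 / 2)) \<le> (\<gamma> * \<delta>)^4" .
qed




lemma rr_pull_in:
  assumes "finite S" "rr S m h = Pull i"
  shows "i \<in> S"
proof -
  have l: "length h < card S * m" using assms(2) by (auto simp: rr_def split: if_splits)
  then have "length h div m < card S" by (simp add: less_mult_imp_div_less)
  moreover have "i = sorted_list_of_set S ! (length h div m)" using assms(2) l by (simp add: rr_def)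
  ultimately show ?thesis using assms(1)
    by (metis length_sorted_list_of_set nth_mem set_sorted_list_of_set)
qed

lemma bound_lemma:
  fixes \<gamma> \<delta> pb s k n :: real
  assumes g: "0 < \<gamma>" "\<gamma> \<le> 1/2" and d: "0 < \<delta>" "\<delta> \<le> 1/2"
    and pb: "pb \<le> (\<gamma> * \<delta>)^4" "0 \<le> pb" and s: "0 \<le> s" "s \<le> 3 * k" and h: "s / 15 \<le> h"
    and mp: "min (\<gamma> * k) h > 0"
  shows "s * pb / min (\<gamma> * k) h \<le> \<delta>"
proof -
  define gd where "gd = \<gamma> * \<delta>"
  have gd0: "0 < gd" using g d by (simp add: gd_def)
  have gd1: "gd \<le> 1/4" unfolding gd_def using g d
    using mult_mono[OF g(2) d(2)] by simp
  have gd2: "gd \<le> \<delta> / 2" unfolding gd_def using g d by (simp add: mult_right_mono[of \<gamma> "1/2" \<delta>, simplified])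
  have "gd^3 \<le> (1/4)^3" using gd0 gd1 by (intro power_mono) auto
  then have "gd^4 \<le> gd * (1/64)" using gd0 by (simp add: power_Suc mult_left_mono[of "gd^3" "1/64" gd] eval_nat_numeral)
  then have pb2: "pb \<le> gd / 64" using pb unfolding gd_def by simp
  have X: "s * pb \<le> s * gd / 64" using mult_left_mono[OF pb2 s(1)] by simp
  have "s * gd \<le> 3 * k * gd" using mult_right_mono[OF s(2)] gd0 by simp
  then have c1a: "s * pb \<le> 3 * k * gd / 64" using X by linarith
  have "0 \<le> k * gd" using s gd0 by simp
  then have "3 * k * gd / 64 \<le> k * gd" by linarith
  also have "k * gd = \<delta> * (\<gamma> * k)" by (simp add: gd_def algebra_simps)
  finally have c1: "s * pb \<le> \<delta> * (\<gamma> * k)" using c1a by linarith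
  have "s * gd \<le> s * (\<delta> / 2)" using mult_left_mono[OF gd2 s(1)] .
  moreover have "\<delta> * (s / 15) \<le> \<delta> * h" using mult_left_mono[OF h] d by simp
  moreover have "s * (\<delta> / 2) / 64 \<le> \<delta> * (s / 15)" using d s by simp
  ultimately have c2: "s * pb \<le> \<delta> * h" using X by linarith
  have "s * pb \<le> \<delta> * min (\<gamma> * k) h" using c1 c2 by (simp add: min_def)
  then show ?thesis using mp by (simp add: divide_le_eq mult.commute)
qed




lemma main_inst:
  fixes S :: "nat set" and K :: nat and \<gamma> \<delta> \<phi> :: real and D :: "nat \<Rightarrow> real measure" and a :: "nat \<Rightarrow> nat"
  assumes fin: "finite S" and S10: "card S mod 10 = 0" and Kev: "even K" and SK: "real (card S) \<le> 3 * real K"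
    and KS: "K + 1 \<le> card S"
    and g: "0 < \<gamma>" "\<gamma> \<le> 1/2" and d: "0 < \<delta>" "\<delta> \<le> 1/2" and p: "0 < \<phi>" "\<phi> \<le> 1"
    and DS: "\<forall>i\<in>S. prob_space (D i) \<and> sets (D i) = sets borel \<and> measure (D i) {0..1} = 1"
    and bij: "bij_betw a {1..card S} S"
    and mono: "\<forall>i j. 1 \<le> i \<longrightarrow> i \<le> j \<longrightarrow> j \<le> card S \<longrightarrow> arm_mean (D (a j)) \<le> arm_mean (D (a i))"
    and gap: "arm_mean (D (a (K div 2))) - arm_mean (D (a K)) \<ge> \<phi>"
  shows "(let N = nat \<lfloor>16 * real (card S) / \<phi>\<^sup>2 * (ln (1/\<gamma>) + ln (1/\<delta>))\<rfloor>;
            P = (\<lambda>s::nat \<Rightarrow> real. rr S (msamp \<gamma> \<delta> \<phi>))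
        in (\<forall>X s k i. P s (hist (P s) X k) = Pull i \<longrightarrow> i \<in> S)
         \<and> (\<forall>X s. (\<forall>p. X p \<in> {0..1}) \<longrightarrow> (\<forall>n. s n \<in> {0..1}) \<longrightarrow> stopped (P s) X N)
         \<and> measure (bandit_space S D)
             {\<omega> \<in> space (bandit_space S D).
                (let T = alg_output (P (snd \<omega>)) (fst \<omega>) N in
                  T \<subseteq> S \<and> card T = card S div 10 \<and>
                  real (card (T \<inter> a ` {K+1..card S})) \<le> \<gamma> * real K)}
           \<ge> 1 - \<delta>)"
proof -
  define m where "m = msamp \<gamma> \<delta> \<phi>"
  define L where "L = ln (1/\<gamma>) + ln (1/\<delta>)"
  define N where "N = nat \<lfloor>16 * real (card S) / \<phi>\<^sup>2 * L\<rfloor>"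
  define n where "n = card S div 10"
  define tp where "tp = a ` {1..K div 2}"
  define bd where "bd = a ` {K+1..card S}"
  note num = numeric[OF g d p]
  have m0: "m > 0" using num(3) by (simp add: m_def)
  have Sge: "card S \<ge> 1" using KS by simp
  have K1: "K \<ge> 1" using SK Sge by linarith
  have NS: "card S * m \<le> N"
  proof -
    have "real (card S * m) = real (card S) * real m" by simp
    also have "\<dots> \<le> real (card S) * (8 * L / \<phi>\<^sup>2 + 1)"
      using num(4) by (intro mult_left_mono) (auto simp: m_def L_def)
    also have "\<dots> \<le> real (card S) * (16 * L / \<phi>\<^sup>2)"
    proof (intro mult_left_mono)
      have e: "16 * L / \<phi>\<^sup>2 = 2 * (8 * L / \<phi>\<^sup>2)" by simp
      have "1 \<le> 8 * L / \<phi>\<^sup>2" using num(2) by (simp add: L_def)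
      then show "8 * L / \<phi>\<^sup>2 + 1 \<le> 16 * L / \<phi>\<^sup>2" using e by linarith
    qed simp
    also have "\<dots> = 16 * real (card S) / \<phi>\<^sup>2 * L" by simp
    finally show ?thesis unfolding N_def by (rule le_nat_floor)
  qed
  have c1: "\<forall>X (s::nat \<Rightarrow> real) k i. rr S m (hist (rr S m) X k) = Pull i \<longrightarrow> i \<in> S"
    using rr_pull_in[OF fin] by blast
  have c2: "\<forall>X (s::nat \<Rightarrow> real). stopped (rr S m) X N" using rr_output(2)[OF fin m0 NS] by blast
  define M1 where "M1 = PiM (S \<times> (UNIV :: nat set)) (\<lambda>p. D (fst p))"
  define M2 where "M2 = (PiM UNIV (\<lambda>_. uniform_measure lborel {0..1::real}) :: (nat \<Rightarrow> real) measure)"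
  have BS: "bandit_space S D = M1 \<Otimes>\<^sub>M M2" unfolding bandit_space_def M1_def M2_def ..
  have inj: "inj_on a {1..card S}" using bij by (simp add: bij_betw_def)
  have aS: "a ` {1..card S} = S" using bij by (simp add: bij_betw_def)
  have K2S: "K div 2 \<le> card S" using KS div_le_dividend[of K 2] by linarith
  have "tp \<subseteq> a ` {1..card S}" unfolding tp_def by (intro image_mono) (use K2S in auto)
  then have tpS: "tp \<subseteq> S" using aS by simp
  have "bd \<subseteq> a ` {1..card S}" unfolding bd_def by (intro image_mono) auto
  then have bdS: "bd \<subseteq> S" using aS by simp
  have disj: "tp \<inter> bd = {}"
  proof -
    have "{1..K div 2} \<inter> {K+1..card S} = {}" by auto
    moreover have "a ` ({1..K div 2} \<inter> {K+1..card S}) = tp \<inter> bd" unfolding tp_def bd_def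
      by (rule inj_on_image_Int[OF inj]) (use K2S in auto)
    ultimately show ?thesis by simp
  qed
  have ctp: "card tp = K div 2"
    unfolding tp_def using KS by (subst card_image[OF inj_on_subset[OF inj]]) auto
  obtain r where r: "K = 2 * r" using Kev by (elim evenE)
  have hK: "real (K div 2) = real K / 2" using r by simp
  obtain q where q: "card S = 10 * q" using S10 by (metis mod_eq_0_iff_dvd dvdE)
  have hn: "real n = real (card S) / 10" unfolding n_def using q by simp
  have nS: "n \<le> card S" unfolding n_def by simp
  have Kh: "K div 2 \<ge> 1" using r K1 by simp
  have mtp: "arm_mean (D (a K)) + \<phi>/2 + \<phi>/2 \<le> arm_mean (D i)" if ii: "i \<in> tp" for i
  proof -
    obtain j where j: "j \<in> {1..K div 2}" "i = a j" using ii[unfolded tp_def] by blast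
    have "arm_mean (D (a (K div 2))) \<le> arm_mean (D (a j))"
      using mono[rule_format, of j "K div 2"] j K2S by simp
    then show ?thesis using gap j by simp
  qed
  have mbd: "arm_mean (D i) \<le> arm_mean (D (a K)) + \<phi>/2 - \<phi>/2" if ii: "i \<in> bd" for i
  proof -
    obtain j where j: "j \<in> {K+1..card S}" "i = a j" using ii[unfolded bd_def] by blast
    have "arm_mean (D (a j)) \<le> arm_mean (D (a K))"
      using mono[rule_format, of K j] j K1 by simp
    then show ?thesis using j by simp
  qed
  have h15: "real (card S) / 15 \<le> real (card tp) - real n" using ctp hK hn SK by simp
  have mpos: "min (\<gamma> * real K) (real (card tp) - real n) > 0"
    using g K1 h15 Sge by (auto simp: min_def)
  have pb: "exp (- (real m * \<phi>\<^sup>2 / 2)) \<le> (\<gamma> * \<delta>)^4" using num(5) by (simp add: m_def)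
  have bound: "real (card S) * exp (- (real m * \<phi>\<^sup>2 / 2)) / min (\<gamma> * real K) (real (card tp) - real n) \<le> \<delta>"
    by (rule bound_lemma[OF g d pb _ _ SK h15 mpos]) auto
  have MP: "1 - \<delta> \<le> measure M1 {x \<in> space M1. let T = topset S n (\<lambda>i. \<Sum>j<m. x (i, j)) in
            T \<subseteq> S \<and> card T = n \<and> real (card (T \<inter> bd)) \<le> \<gamma> * real K}"
    unfolding M1_def
    by (rule main_prob[OF DS fin m0 tpS bdS disj mtp mbd p(1) nS mpos bound])
  define Q where "Q = {x \<in> space M1. let T = topset S n (\<lambda>i. \<Sum>j<m. x (i, j)) in
            T \<subseteq> S \<and> card T = n \<and> real (card (T \<inter> bd)) \<le> \<gamma> * real K}"
  have Qs: "Q \<in> sets M1"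
  proof (rule ccontr)
    assume "Q \<notin> sets M1"
    then have "measure M1 Q = 0" by (simp add: measure_notin_sets)
    then show False using MP d unfolding Q_def by simp
  qed
  interpret pp2: product_prob_space "\<lambda>_::nat. uniform_measure lborel {0..1::real}" "UNIV :: nat set"
    by (intro product_prob_spaceI prob_space_uniform_measure) auto
  have "prob_space M2" unfolding M2_def by (rule pp2.P.prob_space_axioms)
  then interpret M2: prob_space M2 .
  have Eeq: "{\<omega> \<in> space (bandit_space S D).
                (let T = alg_output (rr S m) (fst \<omega>) N in
                  T \<subseteq> S \<and> card T = card S div 10 \<and>
                  real (card (T \<inter> a ` {K+1..card S})) \<le> \<gamma> * real K)} = Q \<times> space M2"
    unfolding BS Q_def bd_def n_def
    by (auto simp: space_pair_measure rr_output(1)[OF fin m0 NS])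
  have "measure (bandit_space S D) (Q \<times> space M2) = measure M1 Q"
  proof -
    have "emeasure (M1 \<Otimes>\<^sub>M M2) (Q \<times> space M2) = emeasure M1 Q * emeasure M2 (space M2)"
      by (rule M2.emeasure_pair_measure_Times[OF Qs]) simp
    then show ?thesis unfolding BS by (simp add: measure_def M2.emeasure_space_1)
  qed
  then have c3: "1 - \<delta> \<le> measure (bandit_space S D) {\<omega> \<in> space (bandit_space S D).
                (let T = alg_output (rr S m) (fst \<omega>) N in
                  T \<subseteq> S \<and> card T = card S div 10 \<and>
                  real (card (T \<inter> a ` {K+1..card S})) \<le> \<gamma> * real K)}"
    using MP unfolding Eeq Q_def by simp
  show ?thesis
    unfolding Let_def using c1 c2 c3 unfolding m_def N_def L_def Let_def by blast
qed



theorem mainTheorem8: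
  "\<exists>C::real. C > 0 \<and>
   (\<exists>alg :: nat set \<Rightarrow> nat \<Rightarrow> real \<Rightarrow> real \<Rightarrow> real \<Rightarrow> (nat \<Rightarrow> real) \<Rightarrow> (nat \<times> real) list \<Rightarrow> action.
     \<forall>(S::nat set) (K::nat) (\<gamma>::real) (\<delta>::real) (\<phi>::real) (D::nat \<Rightarrow> real measure) (a::nat \<Rightarrow> nat).
       finite S \<longrightarrow> card S mod 10 = 0 \<longrightarrow> even K \<longrightarrow>
       real (card S) \<le> 3 * real K \<longrightarrow> K + 1 \<le> card S \<longrightarrow>
       0 < \<gamma> \<longrightarrow> \<gamma> \<le> 1/2 \<longrightarrow> 0 < \<delta> \<longrightarrow> \<delta> \<le> 1/2 \<longrightarrow> 0 < \<phi> \<longrightarrow> \<phi> \<le> 1 \<longrightarrow>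
       (\<forall>i\<in>S. prob_space (D i) \<and> sets (D i) = sets borel \<and> measure (D i) {0..1} = 1) \<longrightarrow>
       bij_betw a {1..card S} S \<longrightarrow>
       (\<forall>i j. 1 \<le> i \<longrightarrow> i \<le> j \<longrightarrow> j \<le> card S \<longrightarrow> arm_mean (D (a j)) \<le> arm_mean (D (a i))) \<longrightarrow>
       arm_mean (D (a (K div 2))) - arm_mean (D (a K)) \<ge> \<phi> \<longrightarrow>
       (let N = nat \<lfloor>C * real (card S) / \<phi>\<^sup>2 * (ln (1/\<gamma>) + ln (1/\<delta>))\<rfloor>;
            P = alg S K \<gamma> \<delta> \<phi>
        in (\<forall>X s k i. P s (hist (P s) X k) = Pull i \<longrightarrow> i \<in> S)
         \<and> (\<forall>X s. (\<forall>p. X p \<in> {0..1}) \<longrightarrow> (\<forall>n. s n \<in> {0..1}) \<longrightarrow> stopped (P s) X N)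
         \<and> measure (bandit_space S D)
             {\<omega> \<in> space (bandit_space S D).
                (let T = alg_output (P (snd \<omega>)) (fst \<omega>) N in
                  T \<subseteq> S \<and> card T = card S div 10 \<and>
                  real (card (T \<inter> a ` {K+1..card S})) \<le> \<gamma> * real K)}
           \<ge> 1 - \<delta>))"
    apply (rule exI[of _ "16::real"])
  apply (rule conjI)
   apply simp
  apply (rule exI[of _ "\<lambda>S K \<gamma> \<delta> \<phi> (s::nat \<Rightarrow> real). rr S (msamp \<gamma> \<delta> \<phi>)"])
  apply (intro allI impI)
  apply (rule main_inst)
                 apply assumption+
  done

end
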